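(* Let $S=\{l_1=w_1,\dots,l_m=w_m\}$ with $l_1,\dots,l_m$ literals and $w_1,\dots,w_m\ge 0$ reals, and let $N$ be a real. Then $[N\le S]$ is strongly equivalent to the aggregate $sum\langle S\rangle\ge N$, and $[S\le N]$ is strongly equivalent to the aggregate $sum\langle S\rangle\le N$.
   Context: A literal is an atom $a$ or $\neg a$. Formulas with aggregates: atoms and $\bot$; combinations by $\wedge,\vee,\to$ ($\neg F:=F\to\bot$, $\top:=\bot\to\bot$; empty conjunction $\top$, empty disjunction $\bot$); and aggregates $op\langle\{F_1=w_1,\dots,F_n=w_n\}\rangle\prec N$; here $op=sum$. $X$ satisfies the aggregate iff $op(W_X)\prec N$, $W_X$ the multiset of $w_i$ with $X\models F_i$. Reduct: $\bot^X=\bot$; $a^X=a$ if $a\in X$, else $\bot$; $(F\otimes G)^X=F^X\otimes G^X$ if $X\models F\otimes G$, else $\bot$; for an aggregate $A$, $A^X=op\langle\{F_1^X=w_1,\dots\}\rangle\prec N$ if $X\models A$, else $\bot$. $X$ is a stable model of a theory $\Gamma$ if $X\models\Gamma^X$ and no proper subset of $X$ satisfies $\Gamma^X$; two formulas are strongly equivalent if adding either to any theory gives the same stable models. The translations of weight constraints into nested expressions are $$[N\le S]=\bigvee_{I\subseteq\{1,\dots,m\}:\,N\le\sum_{i\in I}w_i}\ \bigwedge_{i\in I}l_i,\qquad [S\le N]=\neg\bigvee_{I\subseteq\{1,\dots,m\}:\,N<\sum_{i\in I}w_i}\ \bigwedge_{i\in I}l_i.$$ *)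

theory Defs
  imports Main "HOL.Real"
begin

datatype rel = RLe | RGe | RLt | RGt | REq | RNeq

fun rel_holds :: "rel \<Rightarrow> real \<Rightarrow> real \<Rightarrow> bool" where
  "rel_holds RLe x N = (x \<le> N)"
| "rel_holds RGe x N = (x \<ge> N)"
| "rel_holds RLt x N = (x < N)"
| "rel_holds RGt x N = (x > N)"
| "rel_holds REq x N = (x = N)"
| "rel_holds RNeq x N = (x \<noteq> N)"

text \<open>An aggregate sum<{F1=w1,...,Fn=wn}> rel N; the multiset of weighted
  formulas is represented by a list (duplicates allowed).\<close>
datatype 'a fml =
    Atom 'a
  | Bot
  | And "'a fml" "'a fml"
  | Or "'a fml" "'a fml"
  | Imp "'a fml" "'a fml"
  | SumAgg "('a fml \<times> real) list" rel real

definition Neg :: "'a fml \<Rightarrow> 'a fml" where "Neg F = Imp F Bot"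
definition Top :: "'a fml" where "Top = Imp Bot Bot"

definition BigAnd :: "'a fml list \<Rightarrow> 'a fml" where "BigAnd Fs = foldr And Fs Top"
definition BigOr :: "'a fml list \<Rightarrow> 'a fml" where "BigOr Fs = foldr Or Fs Bot"

fun sat :: "'a set \<Rightarrow> 'a fml \<Rightarrow> bool" where
  "sat X (Atom a) = (a \<in> X)"
| "sat X Bot = False"
| "sat X (And F G) = (sat X F \<and> sat X G)"
| "sat X (Or F G) = (sat X F \<or> sat X G)"
| "sat X (Imp F G) = (sat X F \<longrightarrow> sat X G)"
| "sat X (SumAgg S r N) =
     rel_holds r (sum_list (map (\<lambda>p. if sat X (fst p) then snd p else 0) S)) N"

fun reduct :: "'a set \<Rightarrow> 'a fml \<Rightarrow> 'a fml" where
  "reduct X (Atom a) = (if a \<in> X then Atom a else Bot)"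
| "reduct X Bot = Bot"
| "reduct X (And F G) = (if sat X (And F G) then And (reduct X F) (reduct X G) else Bot)"
| "reduct X (Or F G) = (if sat X (Or F G) then Or (reduct X F) (reduct X G) else Bot)"
| "reduct X (Imp F G) = (if sat X (Imp F G) then Imp (reduct X F) (reduct X G) else Bot)"
| "reduct X (SumAgg S r N) =
     (if sat X (SumAgg S r N)
      then SumAgg (map (\<lambda>p. (reduct X (fst p), snd p)) S) r N else Bot)"

definition stable_model :: "'a fml set \<Rightarrow> 'a set \<Rightarrow> bool" where
  "stable_model \<Gamma> X \<longleftrightarrow>
     (\<forall>F\<in>\<Gamma>. sat X (reduct X F)) \<and>
     \<not> (\<exists>Y. Y \<subset> X \<and> (\<forall>F\<in>\<Gamma>. sat Y (reduct X F)))"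

definition strongly_equivalent :: "'a fml \<Rightarrow> 'a fml \<Rightarrow> bool" where
  "strongly_equivalent F G \<longleftrightarrow>
     (\<forall>\<Gamma> X. stable_model (insert F \<Gamma>) X \<longleftrightarrow> stable_model (insert G \<Gamma>) X)"

datatype 'a lit = PosL 'a | NegL 'a

fun lit_fml :: "'a lit \<Rightarrow> 'a fml" where
  "lit_fml (PosL a) = Atom a"
| "lit_fml (NegL a) = Neg (Atom a)"

text \<open>S = {l1=w1,...,lm=wm} as a list of (literal, weight) pairs.  Subsets
  I of {1..m} correspond exactly to the sublists of S (subseqs).\<close>

definition wsum :: "('a lit \<times> real) list \<Rightarrow> real" where
  "wsum I = sum_list (map snd I)"

definition lower_wc :: "real \<Rightarrow> ('a lit \<times> real) list \<Rightarrow> 'a fml" where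
  "lower_wc N S =
     BigOr (map (\<lambda>I. BigAnd (map (\<lambda>p. lit_fml (fst p)) I))
                (filter (\<lambda>I. N \<le> wsum I) (subseqs S)))"

definition upper_wc :: "('a lit \<times> real) list \<Rightarrow> real \<Rightarrow> 'a fml" where
  "upper_wc S N =
     Neg (BigOr (map (\<lambda>I. BigAnd (map (\<lambda>p. lit_fml (fst p)) I))
                     (filter (\<lambda>I. N < wsum I) (subseqs S))))"

definition agg_of :: "('a lit \<times> real) list \<Rightarrow> rel \<Rightarrow> real \<Rightarrow> 'a fml" where
  "agg_of S r N = SumAgg (map (\<lambda>p. (lit_fml (fst p), snd p)) S) r N"

end

theory Submission
  imports Defs
begin

lemma se_suff:
  assumes "\<And>X Y. Y \<subseteq> X \<Longrightarrow> sat Y (reduct X F) = sat Y (reduct X G)"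
  shows "strongly_equivalent F G"
  unfolding strongly_equivalent_def stable_model_def
  using assms by (auto dest: psubset_imp_subset)

lemma red_mono: "Y \<subseteq> X \<Longrightarrow> sat Y (reduct X F) \<Longrightarrow> sat X F"
  by (induction F) (auto split: if_splits)

lemma sat_BigOr: "sat X (BigOr Fs) = (\<exists>F\<in>set Fs. sat X F)"
  by (induction Fs) (auto simp: BigOr_def)
lemma sat_BigAnd: "sat X (BigAnd Fs) = (\<forall>F\<in>set Fs. sat X F)"
  by (induction Fs) (auto simp: BigAnd_def Top_def)

lemma red_BigOr: "Y \<subseteq> X \<Longrightarrow> sat Y (reduct X (BigOr Fs)) = (\<exists>F\<in>set Fs. sat Y (reduct X F))"
  by (induction Fs) (auto simp: BigOr_def dest: red_mono)
lemma red_BigAnd: "Y \<subseteq> X \<Longrightarrow> sat Y (reduct X (BigAnd Fs)) = (\<forall>F\<in>set Fs. sat Y (reduct X F))"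
  by (induction Fs) (auto simp: BigAnd_def Top_def dest: red_mono)

fun litv :: "'a set \<Rightarrow> 'a set \<Rightarrow> 'a lit \<Rightarrow> bool" where
  "litv Y X (PosL a) = (a \<in> Y)"
| "litv Y X (NegL a) = (a \<notin> X)"

lemma red_lit: "Y \<subseteq> X \<Longrightarrow> sat Y (reduct X (lit_fml l)) = litv Y X l"
  by (cases l) (auto simp: Neg_def)
lemma sat_lit: "sat X (lit_fml l) = litv X X l"
  by (cases l) (auto simp: Neg_def)
lemma litv_mono: "Y \<subseteq> X \<Longrightarrow> litv Y X l \<Longrightarrow> litv X X l"
  by (cases l) auto

lemma filter_subseqs: "filter P S \<in> set (subseqs S)"
  by (induction S) (auto simp: Let_def)

lemma wsum_le:
  assumes "\<forall>p\<in>set S. snd p \<ge> 0" "I \<in> set (subseqs S)" "\<forall>p\<in>set I. P p"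
  shows "wsum I \<le> sum_list (map (\<lambda>p. if P p then snd p else 0) S)"
  using assms
proof (induction S arbitrary: I)
  case Nil then show ?case by (simp add: wsum_def)
next
  case (Cons a S)
  then show ?case
    by (auto simp: Let_def wsum_def) fastforce+
qed

lemma wsum_filter: "wsum (filter P S) = sum_list (map (\<lambda>p. if P p then snd p else 0) S)"
  by (induction S) (auto simp: wsum_def)

lemma ex_ge:
  assumes "\<forall>p\<in>set S. snd p \<ge> 0"
  shows "(\<exists>I\<in>set (subseqs S). N \<le> wsum I \<and> (\<forall>p\<in>set I. P p))
     = (N \<le> sum_list (map (\<lambda>p. if P p then snd p else 0) S))"
proof
  assume "\<exists>I\<in>set (subseqs S). N \<le> wsum I \<and> (\<forall>p\<in>set I. P p)"
  then obtain I where "I \<in> set (subseqs S)" "N \<le> wsum I" "\<forall>p\<in>set I. P p" by blast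
  then show "N \<le> sum_list (map (\<lambda>p. if P p then snd p else 0) S)"
    using wsum_le[OF assms, of I P] by linarith
next
  assume "N \<le> sum_list (map (\<lambda>p. if P p then snd p else 0) S)"
  then show "\<exists>I\<in>set (subseqs S). N \<le> wsum I \<and> (\<forall>p\<in>set I. P p)"
    using filter_subseqs[of P S] wsum_filter[of P S] by (intro bexI[of _ "filter P S"]) auto
qed

lemma ex_gt:
  assumes "\<forall>p\<in>set S. snd p \<ge> 0"
  shows "(\<exists>I\<in>set (subseqs S). N < wsum I \<and> (\<forall>p\<in>set I. P p))
     = (N < sum_list (map (\<lambda>p. if P p then snd p else 0) S))"
proof
  assume "\<exists>I\<in>set (subseqs S). N < wsum I \<and> (\<forall>p\<in>set I. P p)"
  then obtain I where "I \<in> set (subseqs S)" "N < wsum I" "\<forall>p\<in>set I. P p" by blast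
  then show "N < sum_list (map (\<lambda>p. if P p then snd p else 0) S)"
    using wsum_le[OF assms, of I P] by linarith
next
  assume "N < sum_list (map (\<lambda>p. if P p then snd p else 0) S)"
  then show "\<exists>I\<in>set (subseqs S). N < wsum I \<and> (\<forall>p\<in>set I. P p)"
    using filter_subseqs[of P S] wsum_filter[of P S] by (intro bexI[of _ "filter P S"]) auto
qed

lemma red_agg:
  assumes "Y \<subseteq> X"
  shows "sat Y (reduct X (agg_of S r N)) =
    (rel_holds r (sum_list (map (\<lambda>p. if litv X X (fst p) then snd p else 0) S)) N \<and>
     rel_holds r (sum_list (map (\<lambda>p. if litv Y X (fst p) then snd p else 0) S)) N)"
proof -
  have e1: "map (\<lambda>p. if sat X (fst p) then snd p else 0) (map (\<lambda>p. (lit_fml (fst p), snd p)) S)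
     = map (\<lambda>p. if litv X X (fst p) then snd p else 0) S"
    by (simp add: sat_lit)
  have e2: "map (\<lambda>p. if sat Y (fst p) then snd p else 0)
      (map (\<lambda>p. (reduct X (fst p), snd p)) (map (\<lambda>p. (lit_fml (fst p), snd p)) S))
     = map (\<lambda>p. if litv Y X (fst p) then snd p else 0) S"
    by (simp add: red_lit[OF assms])
  show ?thesis unfolding agg_of_def reduct.simps sat.simps e1
    by (simp only: e2 if_splits sat.simps) auto
qed

lemma summono:
  assumes "\<forall>p\<in>set S. snd p \<ge> 0" "Y \<subseteq> X"
  shows "sum_list (map (\<lambda>p. if litv Y X (fst p) then snd p else (0::real)) S)
       \<le> sum_list (map (\<lambda>p. if litv X X (fst p) then snd p else 0) S)"
  apply (rule sum_list_mono)
  using assms litv_mono by fastforce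

theorem proposition17:
  fixes S :: "('a lit \<times> real) list" and N :: real
  assumes "\<forall>p\<in>set S. snd p \<ge> 0"
  shows "strongly_equivalent (lower_wc N S) (agg_of S RGe N)
       \<and> strongly_equivalent (upper_wc S N) (agg_of S RLe N)"
proof
  show "strongly_equivalent (lower_wc N S) (agg_of S RGe N)"
  proof (rule se_suff)
    fix X Y :: "'a set" assume YX: "Y \<subseteq> X"
    have "sat Y (reduct X (lower_wc N S)) =
      (\<exists>I\<in>set (subseqs S). N \<le> wsum I \<and> (\<forall>p\<in>set I. litv Y X (fst p)))"
      unfolding lower_wc_def using YX by (auto simp: red_BigOr red_BigAnd red_lit)
    also have "\<dots> = (N \<le> sum_list (map (\<lambda>p. if litv Y X (fst p) then snd p else 0) S))"
      using ex_ge[OF assms] .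
    also have "\<dots> = sat Y (reduct X (agg_of S RGe N))"
      using summono[OF assms YX] by (simp add: red_agg[OF YX]) linarith
    finally show "sat Y (reduct X (lower_wc N S)) = sat Y (reduct X (agg_of S RGe N))" .
  qed
next
  show "strongly_equivalent (upper_wc S N) (agg_of S RLe N)"
  proof (rule se_suff)
    fix X Y :: "'a set" assume YX: "Y \<subseteq> X"
    let ?G = "BigOr (map (\<lambda>I. BigAnd (map (\<lambda>p. lit_fml (fst p)) I))
                     (filter (\<lambda>I. N < wsum I) (subseqs S)))"
    have "sat Y (reduct X (upper_wc S N)) = (\<not> sat X ?G)"
      unfolding upper_wc_def Neg_def using YX red_mono[OF YX, of ?G] by auto
    also have "\<dots> = (\<not> (\<exists>I\<in>set (subseqs S). N < wsum I \<and> (\<forall>p\<in>set I. litv X X (fst p))))"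
      by (auto simp: sat_BigOr sat_BigAnd sat_lit)
    also have "\<dots> = (\<not> N < sum_list (map (\<lambda>p. if litv X X (fst p) then snd p else 0) S))"
      using ex_gt[OF assms] by simp
    also have "\<dots> = sat Y (reduct X (agg_of S RLe N))"
      using summono[OF assms YX] by (simp add: red_agg[OF YX]) linarith
    finally show "sat Y (reduct X (upper_wc S N)) = sat Y (reduct X (agg_of S RLe N))" .
  qed
qed

end
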